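(* Let $\mathcal E$ be a finite dimensional Hilbert space and let $\psi\in\mathcal C$ satisfy $$0\ge\operatorname{Re}\big[(\psi(z)+I)(\psi(z)-I)^{-1}\big]\ge\operatorname{Re}\big[(z+1)(z-1)^{-1}\big]I\quad\text{for all }z\in\mathbb D.$$ Then there is a unique pair $(A,B)$ with $A$ a self-adjoint operator and $B$ a positive contraction on $\mathcal E$ such that for all $z\in\mathbb D$ $$(\psi(z)+I)(\psi(z)-I)^{-1}=iA+\zeta(z)B,\qquad\text{equivalently}\qquad \psi(z)=(iA+\zeta(z)B+I)(iA+\zeta(z)B-I)^{-1}.$$ In fact $A=\operatorname{Im}\big[(\psi(0)+I)(\psi(0)-I)^{-1}\big]$ and $B=-\operatorname{Re}\big[(\psi(0)+I)(\psi(0)-I)^{-1}\big]$.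
   Context: $\mathbb D$ is the open unit disc, $\zeta(z)=\frac{z+1}{z-1}$, $\operatorname{Re}X=(X+X^* )/2$, $\operatorname{Im}X=(X-X^* )/(2i)$. $\mathcal C=\{\psi\in H^\infty_{\mathbb D}(\mathcal B(\mathcal E)):\sup_z\|\psi(z)\|\le1,\ 1\text{ is not an eigenvalue of }\psi(z)\text{ for any }z\in\mathbb D\}$. *)

theory Defs
  imports "HOL-Analysis.Analysis"
begin

text \<open>Operators on a finite-dimensional Hilbert space E = complex^'n are
  represented by complex matrices complex^'n^'n acting via *v.\<close>

definition cinner :: "complex^'n \<Rightarrow> complex^'n \<Rightarrow> complex" where
  "cinner x y = (\<Sum>i\<in>UNIV. cnj (x$i) * y$i)"

definition cadj :: "complex^'n^'n \<Rightarrow> complex^'n^'n" where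
  "cadj X = (\<chi> i j. cnj (X$j$i))"

definition self_adjoint :: "complex^'n^'n \<Rightarrow> bool" where
  "self_adjoint X \<longleftrightarrow> cadj X = X"

definition positive_op :: "complex^'n^'n \<Rightarrow> bool" where
  "positive_op X \<longleftrightarrow> self_adjoint X \<and> (\<forall>x. 0 \<le> Re (cinner x (X *v x)))"

definition loewner_le :: "complex^'n^'n \<Rightarrow> complex^'n^'n \<Rightarrow> bool" where
  "loewner_le X Y \<longleftrightarrow> positive_op (Y - X)"

definition contraction :: "complex^'n^'n \<Rightarrow> bool" where
  "contraction X \<longleftrightarrow> (\<forall>x. norm (X *v x) \<le> norm x)"

definition op_re :: "complex^'n^'n \<Rightarrow> complex^'n^'n" where
  "op_re X = (\<chi> i j. (X$i$j + cnj (X$j$i)) / 2)"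

definition op_im :: "complex^'n^'n \<Rightarrow> complex^'n^'n" where
  "op_im X = (\<chi> i j. (X$i$j - cnj (X$j$i)) / (2 * \<i>))"

definition zeta :: "complex \<Rightarrow> complex" where
  "zeta z = (z + 1) / (z - 1)"

definition class_C :: "(complex \<Rightarrow> complex^'n^'n) \<Rightarrow> bool" where
  "class_C \<psi> \<longleftrightarrow>
     (\<forall>i j. (\<lambda>z. \<psi> z $ i $ j) holomorphic_on ball 0 1) \<and>
     (\<forall>z\<in>ball 0 1. contraction (\<psi> z)) \<and>
     (\<forall>z\<in>ball 0 1. \<not> (\<exists>x. x \<noteq> 0 \<and> \<psi> z *v x = x))"

definition cayley :: "complex^'n^'n \<Rightarrow> complex^'n^'n" where
  "cayley X = (X + mat 1) ** matrix_inv (X - mat 1)"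

end

theory Submission
  imports Defs "HOL-Complex_Analysis.Complex_Analysis"
begin


lemma moebius_lt1:
  fixes w c :: complex
  assumes "Im w > 0" "Im c > 0"
  shows "norm ((w - c) / (w - cnj c)) < 1"
proof -
  have ne: "w - cnj c \<noteq> 0" using assms by (metis complex.sel(2) complex_cnj_cnj add_pos_pos cnj.sel(2) diff_conv_add_uminus minus_diff_eq right_minus_eq order_less_irrefl)
  have "(norm (w - c))^2 < (norm (w - cnj c))^2"
    unfolding cmod_power2 using assms by (simp add: power2_eq_square algebra_simps)
  hence "norm (w - c) < norm (w - cnj c)"
    by (meson norm_ge_zero power_less_imp_less_base)
  thus ?thesis using ne by (simp add: norm_divide divide_less_eq)
qed

lemma deriv_bound_uhp:
  fixes h :: "complex \<Rightarrow> complex"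
  assumes hol: "h holomorphic_on {s. 0 < Im s}" and K: "K \<ge> 0"
    and bd: "\<And>s. 0 < Im s \<Longrightarrow> 0 \<le> Im (h s) \<and> Im (h s) \<le> K * Im s"
    and s0: "0 < Im s0"
  shows "norm (deriv h s0) \<le> 2 * (K + 1)"
proof -
  define y0 where "y0 = Im s0"
  have y0: "y0 > 0" using s0 y0_def by simp
  define c where "c = h s0 + \<i> * of_real y0"
  have Imc: "Im c = Im (h s0) + y0" by (simp add: c_def)
  have Imc_pos: "Im c > 0" using Imc bd[OF s0] y0 by linarith
  define g where "g u = (h (s0 + of_real y0 * u) + \<i> * of_real y0 - c) / (h (s0 + of_real y0 * u) + \<i> * of_real y0 - cnj c)" for u
  have inU: "0 < Im (s0 + of_real y0 * u)" if "norm u < 1" for u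
  proof -
    have "\<bar>Im u\<bar> \<le> norm u" by (rule abs_Im_le_cmod)
    hence "y0 * \<bar>Im u\<bar> < y0" using that y0 by (simp add: mult_less_cancel_left1 )
    moreover have "-(y0 * \<bar>Im u\<bar>) \<le> y0 * Im u" using mult_left_mono[of "-\<bar>Im u\<bar>" "Im u" y0] y0 by simp
    ultimately have "y0 * Im u > - y0" by linarith
    thus ?thesis by (simp add: y0_def)
  qed
  have Imw: "0 < Im (h (s0 + of_real y0 * u) + \<i> * of_real y0)" if "norm u < 1" for u
    using bd[OF inU[OF that]] y0 by simp
  have den: "h (s0 + of_real y0 * u) + \<i> * of_real y0 - cnj c \<noteq> 0" if "norm u < 1" for u
  proof
    assume "h (s0 + of_real y0 * u) + \<i> * of_real y0 - cnj c = 0"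
    hence "Im (h (s0 + of_real y0 * u) + \<i> * of_real y0) = Im (cnj c)" by (metis eq_iff_diff_eq_0)
    thus False using Imw[OF that] Imc_pos by simp
  qed
  have hd: "(h has_field_derivative deriv h z) (at z)" if "0 < Im z" for z
    using hol that by (auto intro!: holomorphic_derivI simp: open_halfspace_Im_gt)
  have holg: "g holomorphic_on ball 0 1"
  proof -
    have "(\<lambda>u. h (s0 + of_real y0 * u)) holomorphic_on ball 0 1"
    proof (rule holomorphic_on_compose_gen[unfolded o_def, OF _ hol])
      show "(\<lambda>u. s0 + of_real y0 * u) holomorphic_on ball 0 1" by (intro holomorphic_intros)
      show "(\<lambda>u. s0 + of_real y0 * u) ` ball 0 1 \<subseteq> {s. 0 < Im s}" using inU by auto
    qed
    thus ?thesis unfolding g_def using den by (intro holomorphic_intros) auto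
  qed
  have g0: "g 0 = 0" by (simp add: g_def c_def)
  have gl1: "norm (g u) < 1" if "norm u < 1" for u
    unfolding g_def using moebius_lt1[OF Imw[OF that] Imc_pos] by simp
  have "norm (deriv g 0) \<le> 1"
    using Schwarz_Lemma(2)[OF holg g0 gl1, of 0] by auto
  moreover have "(g has_field_derivative deriv h s0 * of_real y0 / (c - cnj c)) (at 0)"
  proof -
    have d1: "((\<lambda>u. h (s0 + of_real y0 * u) + \<i> * of_real y0) has_field_derivative deriv h s0 * of_real y0) (at 0)"
    proof -
      have "((\<lambda>u. s0 + of_real y0 * u) has_field_derivative of_real y0) (at 0)"
        by (auto intro!: derivative_eq_intros)
      from DERIV_chain[OF _ this, of h "deriv h s0"] hd[OF s0]
      have "((\<lambda>u. h (s0 + of_real y0 * u)) has_field_derivative deriv h s0 * of_real y0) (at 0)"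
        by (simp add: o_def)
      thus ?thesis by (auto intro!: derivative_eq_intros)
    qed
    have e0: "h (s0 + of_real y0 * 0) + \<i> * of_real y0 = c" by (simp add: c_def)
    have "c - cnj c = 2 * \<i> * of_real (Im c)" by (simp add: complex_eq_iff)
    hence nz: "c - cnj c \<noteq> 0" using Imc_pos by simp
    have d2: "((\<lambda>u. h (s0 + of_real y0 * u) + \<i> * of_real y0 - c) has_field_derivative deriv h s0 * of_real y0) (at 0)"
      using DERIV_diff[OF d1 DERIV_const[of c]] by simp
    have d3: "((\<lambda>u. h (s0 + of_real y0 * u) + \<i> * of_real y0 - cnj c) has_field_derivative deriv h s0 * of_real y0) (at 0)"
      using DERIV_diff[OF d1 DERIV_const[of "cnj c"]] by simp
    have "(g has_field_derivative
        ((deriv h s0 * of_real y0) * (c - cnj c) - (c - c) * (deriv h s0 * of_real y0)) / ((c - cnj c) * (c - cnj c))) (at 0)"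
      unfolding g_def using DERIV_divide[OF d2 d3] e0 nz by simp
    thus ?thesis using nz by (simp add: power2_eq_square)
  qed
  hence "deriv g 0 = deriv h s0 * of_real y0 / (c - cnj c)" by (rule DERIV_imp_deriv)
  ultimately have "norm (deriv h s0 * of_real y0 / (c - cnj c)) \<le> 1" by simp
  moreover have "c - cnj c = 2 * \<i> * Im c" by (simp add: complex_eq_iff)
  ultimately have "norm (deriv h s0) * y0 / (2 * Im c) \<le> 1"
    using y0 Imc_pos by (simp add: norm_mult norm_divide)
  hence "norm (deriv h s0) * y0 \<le> 2 * Im c" using Imc_pos by (simp add: divide_le_eq)
  also have "\<dots> \<le> 2 * (K * y0 + y0)" using Imc bd[OF s0] y0_def by simp
  finally have "norm (deriv h s0) * y0 \<le> (2 * (K + 1)) * y0" by (simp add: algebra_simps)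
  thus ?thesis using y0 by simp
qed


lemma real_eps_zero:
  fixes a C :: real
  assumes "\<And>y. y > 0 \<Longrightarrow> \<bar>a\<bar> \<le> C * y"
  shows "a = 0"
proof (rule ccontr)
  assume "a \<noteq> 0"
  define y where "y = \<bar>a\<bar> / (2 * (\<bar>C\<bar> + 1))"
  have y: "y > 0" using \<open>a \<noteq> 0\<close> by (simp add: y_def)
  have "C * y \<le> \<bar>C\<bar> * y" using y by (simp add: mult_right_mono)
  also have "\<dots> < (\<bar>C\<bar> + 1) * y" using y by simp
  also have "\<dots> = \<bar>a\<bar> / 2" unfolding y_def by (simp add: field_simps)
  finally have "C * y < \<bar>a\<bar>/2" .
  with assms[OF y] \<open>a \<noteq> 0\<close> show False by simp
qed

lemma closure_uhp: "closure {s::complex. 0 < Im s} = {s. 0 \<le> Im s}"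
proof -
  have "closure {x::complex. \<i> \<bullet> x > 0} = {x. \<i> \<bullet> x \<ge> 0}"
    by (rule closure_halfspace_gt) simp
  moreover have "\<And>x::complex. \<i> \<bullet> x = Im x" by (simp add: inner_complex_def)
  ultimately show ?thesis by simp
qed

lemma uhp_affine:
  fixes h :: "complex \<Rightarrow> complex"
  assumes hol: "h holomorphic_on {s. 0 < Im s}" and K: "K \<ge> 0"
    and bd: "\<And>s. 0 < Im s \<Longrightarrow> 0 \<le> Im (h s) \<and> Im (h s) \<le> K * Im s"
  shows "\<exists>a b::real. \<forall>s. 0 < Im s \<longrightarrow> h s = of_real a + of_real b * s"
proof -
  define U where "U = {s::complex. 0 < Im s}"
  define L where "L = 2 * (K + 1)"
  have L: "L \<ge> 0" using K by (simp add: L_def)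
  have hd: "(h has_field_derivative deriv h z) (at z within U)" if "z \<in> U" for z
    using hol that unfolding U_def by (auto intro!: holomorphic_derivI simp: open_halfspace_Im_gt)
  have lip: "L-lipschitz_on U h"
  proof (rule lipschitz_onI[OF _ L])
    fix x y assume "x \<in> U" "y \<in> U"
    have "norm (h x - h y) \<le> L * norm (x - y)"
      by (rule field_differentiable_bound[OF _ hd _ \<open>x\<in>U\<close> \<open>y\<in>U\<close>])
         (use deriv_bound_uhp[OF hol K bd] convex_halfspace_Im_gt in \<open>auto simp: U_def L_def\<close>)
    thus "dist (h x) (h y) \<le> L * dist x y" by (simp add: dist_norm)
  qed
  obtain g where glip: "L-lipschitz_on (closure U) g" and gh: "\<forall>x\<in>U. g x = h x"
    using lipschitz_extend_closure[OF lip] by blast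
  have clU: "closure U = {s. 0 \<le> Im s}" unfolding U_def by (rule closure_uhp)
  have gbd: "norm (g x - g y) \<le> L * norm (x - y)" if "0 \<le> Im x" "0 \<le> Im y" for x y
    using lipschitz_onD[OF glip, of x y] that clU by (simp add: dist_norm)
  have greal: "Im (g t) = 0" if "Im t = 0" for t
  proof (rule real_eps_zero[where C = "L + K"])
    fix y :: real assume y: "y > 0"
    define t' where "t' = t + \<i> * of_real y"
    have t': "0 < Im t'" using y that by (simp add: t'_def)
    have "norm (g t - g t') \<le> L * norm (t - t')" using gbd[of t t'] that t' by simp
    also have "norm (t - t') = y" using y by (simp add: t'_def norm_mult)
    finally have 1: "norm (g t - h t') \<le> L * y" using gh t' by (simp add: U_def)
    have "\<bar>Im (g t - h t')\<bar> \<le> norm (g t - h t')" by (rule abs_Im_le_cmod)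
    hence "\<bar>Im (g t) - Im (h t')\<bar> \<le> L * y" using 1 by simp
    moreover have "0 \<le> Im (h t')" "Im (h t') \<le> K * y" using bd[OF t'] that by (auto simp: t'_def)
    ultimately show "\<bar>Im (g t)\<bar> \<le> (L + K) * y" by (simp add: algebra_simps abs_le_iff) 
  qed
  define R where "R z = (if 0 \<le> Im z then g z else cnj (g (cnj z)))" for z
  have holR: "R holomorphic_on UNIV"
    unfolding R_def
  proof (rule Schwarz_reflection)
    show "g holomorphic_on UNIV \<inter> {z. 0 < Im z}"
      using hol gh unfolding U_def by (auto intro: holomorphic_transform)
    show "continuous_on (UNIV \<inter> {z. 0 \<le> Im z}) g"
      using lipschitz_on_continuous_on[OF glip] clU by simp
    show "g z \<in> \<real>" if "z \<in> UNIV" "z \<in> \<real>" for z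
      using greal[of z] that by (simp add: complex_is_Real_iff)
  qed auto
  have Rbd: "norm (R z) \<le> (norm (g 0) + L) * norm z ^ 1" if "1 \<le> norm z" for z
  proof -
    have "norm (R z) \<le> norm (g 0) + L * norm z"
    proof (cases "0 \<le> Im z")
      case True
      have "norm (g z) \<le> norm (g 0) + norm (g z - g 0)" by (metis norm_triangle_sub add.commute)
      also have "\<dots> \<le> norm (g 0) + L * norm z" using gbd[of z 0] True by simp
      finally show ?thesis using True by (simp add: R_def)
    next
      case False
      have "norm (g (cnj z)) \<le> norm (g 0) + norm (g (cnj z) - g 0)" by (metis norm_triangle_sub add.commute)
      also have "\<dots> \<le> norm (g 0) + L * norm (cnj z)" using gbd[of "cnj z" 0] False by simp
      finally show ?thesis using False by (simp add: R_def)
    qed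
    also have "\<dots> \<le> (norm (g 0) + L) * norm z" using that mult_left_mono[OF that, of "norm (g 0)"] by (simp add: algebra_simps)
    finally show ?thesis by simp
  qed
  define \<alpha> where "\<alpha> = R 0"
  define \<beta> where "\<beta> = deriv R 0"
  have Raff: "R s = \<alpha> + \<beta> * s" for s
    using Liouville_polynomial[OF holR Rbd, where \<xi> = s] by (simp add: \<alpha>_def \<beta>_def)
  have haff: "h s = \<alpha> + \<beta> * s" if "0 < Im s" for s
    using Raff[of s] gh that by (simp add: R_def U_def)
  have ineq: "0 \<le> Im \<alpha> + Re \<beta> * Im s + Im \<beta> * Re s \<and> Im \<alpha> + Re \<beta> * Im s + Im \<beta> * Re s \<le> K * Im s"
    if "0 < Im s" for s
    using bd[OF that] haff[OF that] by simp
  have Imb: "Im \<beta> = 0"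
  proof (rule ccontr)
    assume nz: "Im \<beta> \<noteq> 0"
    define t where "t = (K + 1 + \<bar>Im \<alpha>\<bar> + \<bar>Re \<beta>\<bar>) / Im \<beta>"
    have "Im \<beta> * t = K + 1 + \<bar>Im \<alpha>\<bar> + \<bar>Re \<beta>\<bar>" using nz by (simp add: t_def)
    moreover have "Im \<alpha> + Re \<beta> * Im (Complex t 1) + Im \<beta> * Re (Complex t 1) \<le> K * Im (Complex t 1)"
      using ineq[of "Complex t 1"] by simp
    ultimately show False by (simp add: mult.commute)
  qed
  have Ima: "Im \<alpha> = 0"
  proof (rule real_eps_zero[where C = "K + \<bar>Re \<beta>\<bar>"])
    fix y :: real assume y: "y > 0"
    have "0 \<le> Im \<alpha> + Re \<beta> * y" "Im \<alpha> + Re \<beta> * y \<le> K * y"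
      using ineq[of "Complex 0 y"] y Imb by simp_all
    moreover have "\<bar>Re \<beta> * y\<bar> \<le> \<bar>Re \<beta>\<bar> * y" using y by (simp add: abs_mult)
    moreover have "0 \<le> K * y" using K y by simp
    ultimately show "\<bar>Im \<alpha>\<bar> \<le> (K + \<bar>Re \<beta>\<bar>) * y" by (simp add: algebra_simps abs_le_iff)
  qed
  have "\<alpha> = of_real (Re \<alpha>)" "\<beta> = of_real (Re \<beta>)" using Ima Imb by (simp_all add: complex_eq_iff)
  thus ?thesis using haff by metis
qed


lemma Re_zeta_neg:
  assumes "norm z < 1"
  shows "Re (zeta z) < 0"
proof -
  have n: "(Re z)^2 + (Im z)^2 < 1"
    using assms by (metis cmod_power2 norm_ge_zero power_less_one_iff abs_norm_cancel power2_abs le_less_trans norm_ge_zero less_le_trans abs_less_iff power_strict_mono zero_less_numeral less_imp_le power_one) 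
  have z1: "z \<noteq> 1" using assms by auto
  hence d: "(Re z - 1)^2 + (Im z)^2 > 0" by (metis add_eq_0_iff2 complex_eq_iff one_complex.simps(1) one_complex.simps(2) sum_power2_gt_zero_iff diff_eq_eq add_0)
  have "Re (zeta z) = ((Re z + 1) * (Re z - 1) + Im z * Im z) / ((Re z - 1)^2 + (Im z)^2)"
    unfolding zeta_def by (simp add: Re_divide)
  also have "(Re z + 1) * (Re z - 1) + Im z * Im z = (Re z)^2 + (Im z)^2 - 1" by (simp add: algebra_simps power2_eq_square)
  finally show ?thesis using n d by (simp add: divide_neg_pos)
qed

lemma disc_affine:
  fixes q :: "complex \<Rightarrow> complex"
  assumes hol: "q holomorphic_on ball 0 1" and K: "K \<ge> 0"
    and bd: "\<forall>z\<in>ball 0 1. Re (zeta z) * K \<le> Re (q z) \<and> Re (q z) \<le> 0"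
  shows "\<exists>a b::real. \<forall>z\<in>ball 0 1. q z = \<i> * of_real a + of_real b * zeta z"
proof -
  define m where "m s = (s - \<i>) / (s + \<i>)" for s
  define h where "h s = - \<i> * q (m s)" for s
  have spi: "s + \<i> \<noteq> 0" if "0 < Im s" for s
  proof
    assume "s + \<i> = 0" hence "Im (s + \<i>) = 0" by simp
    thus False using that by simp
  qed
  have mball: "m s \<in> ball 0 1" if "0 < Im s" for s
    using moebius_lt1[OF that, of \<i>] by (simp add: m_def)
  have zm: "zeta (m s) = \<i> * s" if "0 < Im s" for s
  proof -
    have n: "s + \<i> \<noteq> 0" using spi[OF that] .
    have 1: "m s + 1 = 2 * s / (s + \<i>)" using n unfolding m_def by (simp add: field_simps)
    have 2: "m s - 1 = - 2 * \<i> / (s + \<i>)" using n unfolding m_def by (simp add: field_simps)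
    have "zeta (m s) = (2 * s) / (- 2 * \<i>)" unfolding zeta_def 1 2 using n by simp
    also have "\<dots> = \<i> * s" by (simp add: field_simps)
    finally show ?thesis .
  qed
  have holh: "h holomorphic_on {s. 0 < Im s}"
  proof -
    have "m holomorphic_on {s. 0 < Im s}" unfolding m_def using spi by (intro holomorphic_intros) auto
    hence "q \<circ> m holomorphic_on {s. 0 < Im s}"
      by (rule holomorphic_on_compose_gen[OF _ hol]) (use mball in auto)
    thus ?thesis unfolding h_def o_def by (intro holomorphic_intros) 
  qed
  have bdh: "0 \<le> Im (h s) \<and> Im (h s) \<le> K * Im s" if "0 < Im s" for s
  proof -
    have "Re (zeta (m s)) * K \<le> Re (q (m s))" "Re (q (m s)) \<le> 0" using bd mball[OF that] by auto
    moreover have "Re (zeta (m s)) = - Im s" using zm[OF that] by simp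
    ultimately show ?thesis by (simp add: h_def algebra_simps)
  qed
  obtain a b :: real where ab: "\<And>s. 0 < Im s \<Longrightarrow> h s = of_real a + of_real b * s"
    using uhp_affine[OF holh K bdh] by blast
  have "q z = \<i> * of_real a + of_real b * zeta z" if z: "z \<in> ball 0 1" for z
  proof -
    define s where "s = - \<i> * zeta z"
    have s: "0 < Im s" using Re_zeta_neg[of z] z by (simp add: s_def)
    have z1: "z - 1 \<noteq> 0" using z by auto
    have "m s = z" unfolding m_def s_def zeta_def using z1 by (simp add: field_simps)
    hence "h s = - \<i> * q z" by (simp add: h_def)
    hence "q z = \<i> * h s" by simp
    also have "\<dots> = \<i> * of_real a + of_real b * zeta z" proof -
      have "\<i> * h s = \<i> * (of_real a + of_real b * s)" using ab[OF s] by simp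
      also have "\<dots> = \<i> * of_real a + of_real b * zeta z" unfolding s_def by (simp add: algebra_simps)
      finally show ?thesis .
    qed
    finally show ?thesis .
  qed
  thus ?thesis by blast
qed



lemma matc_entries: "(mat c ** (X::'a::comm_ring_1^'n^'n)) = (\<chi> i j. c * X$i$j)"
  unfolding matrix_matrix_mult_def mat_def
  by (simp add: vec_eq_iff if_distrib if_distribR sum.delta cong: if_cong)

lemma matc_entries_r: "((X::'a::comm_ring_1^'n^'n) ** mat c) = (\<chi> i j. c * X$i$j)"
  unfolding matrix_matrix_mult_def mat_def
  by (simp add: vec_eq_iff if_distrib if_distribR sum.delta' mult.commute cong: if_cong)

lemma matc_comm: "mat c ** (X::'a::comm_ring_1^'n^'n) = X ** mat c"
  by (simp add: matc_entries matc_entries_r)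

lemma scal_mul_r: "(X::'a::comm_ring_1^'n^'n) ** (mat a ** Y) = mat a ** (X ** Y)"
  by (metis matrix_mul_assoc matc_comm)

lemma scal_mul_l: "(mat a ** (X::'a::comm_ring_1^'n^'n)) ** Y = mat a ** (X ** Y)"
  by (metis matrix_mul_assoc)

lemma mat_mult_mat: "mat a ** mat b = (mat (a * b) :: 'a::comm_ring_1^'n^'n)"
  by (simp add: matc_entries) (simp add: mat_def vec_eq_iff)

lemma mat_add: "mat a + mat b = (mat (a + b) :: 'a::comm_ring_1^'n^'n)"
  by (simp add: mat_def vec_eq_iff)

lemma mat_diff: "mat a - mat b = (mat (a - b) :: 'a::comm_ring_1^'n^'n)"
  by (simp add: mat_def vec_eq_iff)

lemma matrix_add_rdistrib': "((A + B) ** C) = (A ** C) + ((B::'a::comm_ring_1^'n^'n) ** C)"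
  by (vector matrix_matrix_mult_def sum.distrib[symmetric] field_simps)

lemma matrix_diff_rdistrib': "((A - B) ** C) = (A ** C) - ((B::'a::comm_ring_1^'n^'n) ** C)"
  by (vector matrix_matrix_mult_def sum_subtractf[symmetric] field_simps)

lemma matrix_diff_ldistrib': "(C ** (A - B)) = (C ** A) - (C ** (B::'a::comm_ring_1^'n^'n))"
  by (vector matrix_matrix_mult_def sum_subtractf[symmetric] field_simps)

lemma matrix_inv_props:
  assumes "invertible (A::'a::comm_ring_1^'n^'n)"
  shows "A ** matrix_inv A = mat 1" "matrix_inv A ** A = mat 1"
  using someI_ex[OF assms[unfolded invertible_def]] unfolding matrix_inv_def by auto

lemma matrix_inv_unique:
  assumes "A ** B = mat 1" "B ** A = mat 1"
  shows "matrix_inv (A::'a::comm_ring_1^'n^'n) = B"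
proof -
  have inv: "invertible A" using assms unfolding invertible_def by blast
  have "matrix_inv A = (B ** A) ** matrix_inv A" using assms by simp
  also have "\<dots> = B ** (A ** matrix_inv A)" by (simp add: matrix_mul_assoc)
  also have "\<dots> = B" using matrix_inv_props[OF inv] by simp
  finally show ?thesis .
qed

lemma invertible_of_no_eig:
  fixes P :: "complex^'n^'n"
  assumes "\<not> (\<exists>x. x \<noteq> 0 \<and> P *v x = x)"
  shows "invertible (P - mat 1)"
proof -
  have "inj ((*v) (P - mat 1))"
  proof (rule injI)
    fix x y assume "(P - mat 1) *v x = (P - mat 1) *v y"
    hence "(P - mat 1) *v (x - y) = 0" by (simp add: matrix_vector_mult_diff_distrib)
    hence "P *v (x - y) = x - y" by (simp add: matrix_vector_mult_diff_rdistrib)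
    thus "x = y" using assms by (metis right_minus_eq)
  qed
  hence "det (matrix ((*v) (P - mat 1))) \<noteq> 0"
    using det_nz_iff_inj_gen[OF matrix_vector_mul_linear_gen] by blast
  thus ?thesis by (simp add: invertible_det_nz matrix_of_matrix_vector_mul)
qed

lemma cayley_inv:
  fixes P :: "complex^'n^'n"
  assumes inv: "invertible (P - mat 1)"
  shows "P = (cayley P + mat 1) ** matrix_inv (cayley P - mat 1)"
    and "cayley P = mat 1 + mat 2 ** matrix_inv (P - mat 1)"
proof -
  define N where "N = P - mat 1"
  define Ni where "Ni = matrix_inv N"
  have NNi: "N ** Ni = mat 1" "Ni ** N = mat 1" using matrix_inv_props[OF inv] by (simp_all add: N_def Ni_def)
  have P: "P = N + mat 1" by (simp add: N_def)
  have PI: "P + mat 1 = N + mat 2" unfolding P by (simp add: mat_add add.assoc)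
  have C: "cayley P = mat 1 + mat 2 ** Ni"
    unfolding cayley_def PI N_def[symmetric] Ni_def[symmetric] matrix_add_rdistrib' NNi by simp
  thus "cayley P = mat 1 + mat 2 ** matrix_inv (P - mat 1)" by (simp add: Ni_def N_def)
  have CmI: "cayley P - mat 1 = mat 2 ** Ni" unfolding C by simp
  have "matrix_inv (mat 2 ** Ni) = mat (1/2) ** N"
  proof (rule matrix_inv_unique)
    have "(mat 2 ** Ni) ** (mat (1/2) ** N) = mat 2 ** (mat (1/2) ** (Ni ** N))" by (simp only: scal_mul_l[of 2 Ni] scal_mul_r[of Ni])
    thus "(mat 2 ** Ni) ** (mat (1/2) ** N) = mat 1" by (simp add: mat_mult_mat NNi)
    have "(mat (1/2) ** N) ** (mat 2 ** Ni) = mat (1/2) ** (mat 2 ** (N ** Ni))" by (simp only: scal_mul_l[of "1/2" N] scal_mul_r[of N])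
    thus "(mat (1/2) ** N) ** (mat 2 ** Ni) = mat 1" by (simp add: mat_mult_mat NNi)
  qed
  moreover have m2: "mat 1 + mat 1 = (mat 2 :: complex^'n^'n)" by (simp add: mat_add)
  moreover have "cayley P + mat 1 = mat 2 + mat 2 ** Ni" unfolding C using m2 by (metis add.commute add.left_commute)
  ultimately have "(cayley P + mat 1) ** matrix_inv (cayley P - mat 1) = (mat 2 + mat 2 ** Ni) ** (mat (1/2) ** N)"
    unfolding CmI by simp
  also have "\<dots> = (mat 2 ** mat (1/2)) ** N + (mat 2 ** Ni) ** (mat (1/2) ** N)"
    by (simp only: matrix_add_rdistrib' scal_mul_l)
  also have "(mat 2 ** Ni) ** (mat (1/2) ** N) = mat 2 ** (mat (1/2) ** (Ni ** N))"
    by (simp only: scal_mul_l[of 2 Ni] scal_mul_r[of Ni])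
  finally show "P = (cayley P + mat 1) ** matrix_inv (cayley P - mat 1)"
    by (simp add: mat_mult_mat NNi P matrix_mul_assoc)
qed



lemma cinner_add_left: "cinner (u + v) w = cinner u w + cinner v w"
  by (simp add: cinner_def sum.distrib distrib_right)
lemma cinner_add_right: "cinner w (u + v) = cinner w u + cinner w v"
  by (simp add: cinner_def sum.distrib distrib_left)
lemma cinner_diff_left: "cinner (u - v) w = cinner u w - cinner v w"
  by (simp add: cinner_def sum_subtractf left_diff_distrib)
lemma cinner_diff_right: "cinner w (u - v) = cinner w u - cinner w v"
  by (simp add: cinner_def sum_subtractf right_diff_distrib)
lemma cinner_scale_left: "cinner (c *s u) w = cnj c * cinner u w"
  by (simp add: cinner_def sum_distrib_left mult_ac)
lemma cinner_scale_right: "cinner w (c *s u) = c * cinner w u"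
  by (simp add: cinner_def sum_distrib_left mult_ac)
lemma cinner_commute: "cinner u w = cnj (cinner w u)"
  by (simp add: cinner_def mult.commute)
lemma mv_scale: "(M::complex^'n^'n) *v (c *s u) = c *s (M *v u)"
  by (simp add: matrix_vector_mult_def vec_eq_iff sum_distrib_left mult_ac)

lemma cinner_adj: "cinner x (cadj X *v y) = cnj (cinner y (X *v x))"
  unfolding cinner_def cadj_def matrix_vector_mult_def
  by (simp add: sum_distrib_left mult_ac) (rule sum.swap)

lemma cinner_sa: "self_adjoint X \<Longrightarrow> cinner x (X *v y) = cinner (X *v x) y"
  by (metis cinner_adj cinner_commute self_adjoint_def)

lemma op_re_eq: "op_re X = mat (1/2::complex) ** (X + cadj X)"
  by (simp add: op_re_def cadj_def vec_eq_iff matc_entries)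
lemma op_im_eq: "op_im X = mat (1/(2*\<i>)) ** (X - cadj X)"
  by (simp add: op_im_def cadj_def vec_eq_iff matc_entries)
lemma mv_scaleM: "(mat (c::complex) ** (M::complex^'n^'n)) *v u = c *s (M *v u)"
  by (simp add: matc_entries matrix_vector_mult_def vec_eq_iff sum_distrib_left mult_ac)

lemma cinner_op_re: "cinner x (op_re X *v x) = of_real (Re (cinner x (X *v x)))"
  unfolding op_re_eq mv_scaleM cinner_scale_right matrix_vector_mult_add_rdistrib cinner_add_right cinner_adj
  by (simp add: complex_add_cnj)

lemma cinner_op_im: "cinner x (op_im X *v x) = of_real (Im (cinner x (X *v x)))"
  unfolding op_im_eq mv_scaleM cinner_scale_right matrix_vector_mult_diff_rdistrib cinner_diff_right cinner_adj
  by (simp add: complex_diff_cnj field_simps)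

lemma sa_op_re: "self_adjoint (op_re X)"
  by (simp add: self_adjoint_def op_re_def cadj_def vec_eq_iff add.commute)
lemma sa_op_im: "self_adjoint (op_im X)"
  by (simp add: self_adjoint_def op_im_def cadj_def vec_eq_iff field_simps)

lemma cinner_axis: "cinner (axis i 1) y = y $ i"
  by (simp add: cinner_def axis_def if_distrib if_distribR sum.delta cong: if_cong)
lemma mv_axis: "((M::complex^'n^'n) *v axis j 1) $ i = M $ i $ j"
  by (simp add: matrix_vector_mult_def axis_def if_distrib if_distribR sum.delta' cong: if_cong)

lemma quad_zero:
  fixes M :: "complex^'n^'n"
  assumes q: "\<And>x. cinner x (M *v x) = 0"
  shows "M = 0"
proof -
  have s: "cinner u (M *v v) = 0" for u v
  proof -
    have 1: "cinner u (M *v v) + cinner v (M *v u) = 0"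
      using q[of "u + v"] q[of u] q[of v]
      by (simp add: matrix_vector_right_distrib cinner_add_left cinner_add_right add.commute)
    have 2: "cinner u (M *v (\<i> *s v)) + cinner (\<i> *s v) (M *v u) = 0"
      using q[of "u + \<i> *s v"] q[of u] q[of "\<i> *s v"]
      by (simp add: matrix_vector_right_distrib cinner_add_left cinner_add_right add.commute)
    hence "\<i> * cinner u (M *v v) - \<i> * cinner v (M *v u) = 0"
      by (simp add: mv_scale cinner_scale_left cinner_scale_right)
    hence "cinner u (M *v v) = cinner v (M *v u)" by (simp add: right_diff_distrib[symmetric])
    with 1 show ?thesis by simp
  qed
  show ?thesis
    using s[of "axis i 1" "axis j 1" for i j] by (simp add: vec_eq_iff cinner_axis mv_axis)
qed

lemma cinner_self_norm: "Re (cinner x x) = (norm x)^2"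
proof -
  have e: "Re (cnj a * a) = (cmod a)^2" for a unfolding cmod_power2 by (simp add: power2_eq_square)
  have "Re (cinner x x) = (\<Sum>i\<in>UNIV. (cmod (x$i))^2)"
    by (simp only: cinner_def Re_sum e)
  also have "\<dots> = (norm x)^2"
    by (simp add: norm_vec_def L2_set_def sum_nonneg)
  finally show ?thesis .
qed

lemma contraction_of_pos:
  fixes B :: "complex^'n^'n"
  assumes pB: "positive_op B" and pC: "positive_op (mat 1 - B)"
  shows "contraction B"
  unfolding contraction_def
proof
  fix x :: "complex^'n"
  define C where "C = mat 1 - B"
  define u where "u = B *v x"
  define w where "w = C *v x"
  have saB: "self_adjoint B" and saC: "self_adjoint C" using pB pC by (auto simp: positive_op_def C_def)
  have x: "x = u + w" by (simp add: u_def w_def C_def matrix_vector_mult_diff_rdistrib)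
  have Bw: "B *v w = C *v u"
    by (simp add: u_def w_def C_def matrix_vector_mult_diff_rdistrib matrix_vector_mult_diff_distrib)
  have "cinner w u = cinner w (B *v u) + cinner w (B *v w)"
    by (metis u_def x matrix_vector_right_distrib cinner_add_right)
  also have "cinner w (B *v u) = cinner (B *v w) u" by (rule cinner_sa[OF saB])
  also have "\<dots> = cnj (cinner u (C *v u))" using Bw cinner_commute[of "C *v u" u] by simp
  finally have "Re (cinner w u) = Re (cinner u (C *v u)) + Re (cinner w (B *v w))" by simp
  moreover have "0 \<le> Re (cinner u (C *v u))" "0 \<le> Re (cinner w (B *v w))"
    using pB pC by (auto simp: positive_op_def C_def)
  ultimately have wu: "0 \<le> Re (cinner w u)" by linarith
  have "Re (cinner x x) = Re (cinner u u) + 2 * Re (cinner w u) + Re (cinner w w)"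
    unfolding x cinner_add_left cinner_add_right
    by (simp add: cinner_commute[of u w])
  hence "(norm u)^2 \<le> (norm x)^2"
    using wu cinner_self_norm[of w] cinner_self_norm[of u] cinner_self_norm[of x] by simp
  thus "norm (B *v x) \<le> norm x" unfolding u_def using power2_le_imp_le norm_ge_zero by blast
qed



lemma hol_det:
  fixes M :: "complex \<Rightarrow> complex^'n^'n"
  assumes "\<And>i j. (\<lambda>z. M z $ i $ j) holomorphic_on S"
  shows "(\<lambda>z. det (M z)) holomorphic_on S"
  unfolding det_def
  by (intro holomorphic_on_sum holomorphic_on_mult holomorphic_on_prod holomorphic_on_const assms)

lemma matrix_inv_entry:
  fixes N :: "complex^'n^'n"
  assumes inv: "invertible N"
  shows "matrix_inv N $ k $ j = det (\<chi> a b. if b = k then axis j 1 $ a else N $ a $ b) / det N"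
proof -
  have NNi: "N ** matrix_inv N = mat 1"
    using someI_ex[OF inv[unfolded invertible_def]] unfolding matrix_inv_def by auto
  have d: "det N \<noteq> 0" using inv invertible_det_nz by blast
  have "N *v (matrix_inv N *v axis j 1) = axis j 1"
    by (simp add: matrix_vector_mul_assoc NNi)
  hence "matrix_inv N *v axis j 1 = (\<chi> k. det (\<chi> a b. if b = k then axis j 1 $ a else N $ a $ b) / det N)"
    using cramer[OF d] by blast
  moreover have "(matrix_inv N *v axis j 1) $ k = matrix_inv N $ k $ j"
    by (simp add: matrix_vector_mult_def axis_def if_distrib if_distribR sum.delta' cong: if_cong)
  ultimately show ?thesis by simp
qed

lemma hol_matrix_inv:
  fixes N :: "complex \<Rightarrow> complex^'n^'n"
  assumes hol: "\<And>i j. (\<lambda>z. N z $ i $ j) holomorphic_on S"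
    and inv: "\<And>z. z \<in> S \<Longrightarrow> invertible (N z)"
  shows "(\<lambda>z. matrix_inv (N z) $ k $ j) holomorphic_on S"
proof -
  have h1: "(\<lambda>z. det (\<chi> a b. if b = k then axis j 1 $ a else N z $ a $ b)) holomorphic_on S"
  proof (rule hol_det)
    fix a b
    show "(\<lambda>z. (\<chi> a b. if b = k then axis j 1 $ a else N z $ a $ b) $ a $ b) holomorphic_on S"
      by (cases "b = k") (simp_all add: hol)
  qed
  have h2: "(\<lambda>z. det (N z)) holomorphic_on S" by (rule hol_det[OF hol])
  have nz: "det (N z) \<noteq> 0" if "z \<in> S" for z using inv[OF that] invertible_det_nz by blast
  have "(\<lambda>z. det (\<chi> a b. if b = k then axis j 1 $ a else N z $ a $ b) / det (N z)) holomorphic_on S"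
    by (rule holomorphic_on_divide[OF h1 h2 nz])
  thus ?thesis
    by (rule holomorphic_transform) (simp add: matrix_inv_entry[OF inv])
qed


lemma mv_neg: "(- (X::complex^'n^'n)) *v x = - (X *v x)"
  by (simp add: matrix_vector_mult_def vec_eq_iff sum_negf)

lemma cinner_neg_right: "cinner x (- v) = - cinner x v"
  by (simp add: cinner_def sum_negf)

lemma cinner_mat: "cinner x (mat c *v x) = c * cinner x x"
proof -
  have "mat c = mat c ** (mat 1 :: complex^'n^'n)" by simp
  hence "mat c *v x = c *s x" by (metis mv_scaleM matrix_vector_mul_lid)
  thus ?thesis by (simp add: cinner_scale_right)
qed

lemma zeta0: "zeta 0 = -1" by (simp add: zeta_def)

lemma op_parts_unique:
  fixes A B :: "complex^'n^'n"
  assumes "self_adjoint A" "self_adjoint B"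
  shows "op_im (mat \<i> ** A + mat (-1) ** B) = A" "- op_re (mat \<i> ** A + mat (-1) ** B) = B"
proof -
  have a: "cnj (A$j$i) = A$i$j" for i j using assms(1) unfolding self_adjoint_def cadj_def
    by (metis vec_lambda_beta)
  have b: "cnj (B$j$i) = B$i$j" for i j using assms(2) unfolding self_adjoint_def cadj_def
    by (metis vec_lambda_beta)
  show "op_im (mat \<i> ** A + mat (-1) ** B) = A"
    by (simp add: op_im_def matc_entries vec_eq_iff a b field_simps)
  show "- op_re (mat \<i> ** A + mat (-1) ** B) = B"
    by (simp add: op_re_def matc_entries vec_eq_iff a b field_simps)
qed

theorem lemma4p8:
  fixes \<psi> :: "complex \<Rightarrow> complex^'n^'n"
  assumes "class_C \<psi>"
    and "\<forall>z\<in>ball 0 1. loewner_le (op_re (cayley (\<psi> z))) 0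
           \<and> loewner_le (mat (complex_of_real (Re (zeta z)))) (op_re (cayley (\<psi> z)))"
  shows "(\<exists>!AB. self_adjoint (fst AB) \<and> positive_op (snd AB) \<and> contraction (snd AB) \<and>
            (\<forall>z\<in>ball 0 1. cayley (\<psi> z) = mat \<i> ** fst AB + mat (zeta z) ** snd AB))
    \<and> (let A = op_im (cayley (\<psi> 0)); B = - op_re (cayley (\<psi> 0)) in
         self_adjoint A \<and> positive_op B \<and> contraction B \<and>
         (\<forall>z\<in>ball 0 1. cayley (\<psi> z) = mat \<i> ** A + mat (zeta z) ** B
            \<and> \<psi> z = (mat \<i> ** A + mat (zeta z) ** B + mat 1)
                       ** matrix_inv (mat \<i> ** A + mat (zeta z) ** B - mat 1)))"
proof -
  define F where "F z = cayley (\<psi> z)" for z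
  define A where "A = op_im (F 0)"
  define B where "B = - op_re (F 0)"
  have holpsi: "\<And>i j. (\<lambda>z. \<psi> z $ i $ j) holomorphic_on ball 0 1"
    and noeig: "\<And>z. z \<in> ball 0 1 \<Longrightarrow> \<not> (\<exists>x. x \<noteq> 0 \<and> \<psi> z *v x = x)"
    using assms(1) unfolding class_C_def by auto
  have inv: "invertible (\<psi> z - mat 1)" if "z \<in> ball 0 1" for z
    by (rule invertible_of_no_eig[OF noeig[OF that]])
  have holF: "(\<lambda>z. F z $ i $ j) holomorphic_on ball 0 1" for i j
  proof -
    have hN: "(\<lambda>z. (\<psi> z - mat 1) $ a $ b) holomorphic_on ball 0 1" for a b
      by (simp add: holpsi holomorphic_on_diff)
    have "(\<lambda>z. mat 1 $ i $ j + 2 * matrix_inv (\<psi> z - mat 1) $ i $ j) holomorphic_on ball 0 1"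
      by (intro holomorphic_intros hol_matrix_inv[OF hN inv]) auto
    thus ?thesis
    proof (rule holomorphic_transform)
      fix z :: complex assume "z \<in> ball 0 1"
      show "mat 1 $ i $ j + 2 * matrix_inv (\<psi> z - mat 1) $ i $ j = F z $ i $ j"
        unfolding F_def cayley_inv(2)[OF inv[OF \<open>z \<in> ball 0 1\<close>]] by (simp add: matc_entries)
    qed
  qed
  have holq: "(\<lambda>z. cinner x (F z *v x)) holomorphic_on ball 0 1" for x
    unfolding cinner_def matrix_vector_mult_def
    by (simp, intro holomorphic_on_sum holomorphic_on_mult holomorphic_on_const holF)
  have key: "F z = mat \<i> ** A + mat (zeta z) ** B" if z: "z \<in> ball 0 1" for z
  proof -
    have "F z - (mat \<i> ** A + mat (zeta z) ** B) = 0"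
    proof (rule quad_zero)
      fix x :: "complex^'n"
      define K where "K = Re (cinner x x)"
      have K: "K \<ge> 0" unfolding K_def cinner_self_norm by simp
      have bd: "\<forall>z\<in>ball 0 1. Re (zeta z) * K \<le> Re (cinner x (F z *v x)) \<and> Re (cinner x (F z *v x)) \<le> 0"
      proof
        fix z :: complex assume z: "z \<in> ball 0 1"
        have p1: "positive_op (0 - op_re (F z))" and
             p2: "positive_op (op_re (F z) - mat (complex_of_real (Re (zeta z))))"
          using assms(2) z unfolding loewner_le_def F_def by auto
        have "0 \<le> Re (cinner x ((0 - op_re (F z)) *v x))" using p1 unfolding positive_op_def by blast
        hence 1: "Re (cinner x (F z *v x)) \<le> 0"
          by (simp add: mv_neg cinner_neg_right cinner_op_re)
        have "0 \<le> Re (cinner x ((op_re (F z) - mat (complex_of_real (Re (zeta z)))) *v x))"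
          using p2 unfolding positive_op_def by blast
        hence 2: "Re (zeta z) * K \<le> Re (cinner x (F z *v x))"
          by (simp add: matrix_vector_mult_diff_rdistrib cinner_diff_right cinner_op_re cinner_mat K_def)
        show "Re (zeta z) * K \<le> Re (cinner x (F z *v x)) \<and> Re (cinner x (F z *v x)) \<le> 0"
          using 1 2 by simp
      qed
      obtain a b :: real where ab: "\<forall>z\<in>ball 0 1. cinner x (F z *v x) = \<i> * of_real a + of_real b * zeta z"
        using disc_affine[OF holq K bd] by blast
      have q0: "cinner x (F 0 *v x) = \<i> * of_real a - of_real b" using ab zeta0 by simp
      have qA: "cinner x (A *v x) = of_real a" unfolding A_def cinner_op_im q0 by simp
      have qB: "cinner x (B *v x) = of_real b"
        unfolding B_def mv_neg cinner_neg_right cinner_op_re q0 by simp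
      show "cinner x ((F z - (mat \<i> ** A + mat (zeta z) ** B)) *v x) = 0"
        using ab z qA qB
        by (simp add: matrix_vector_mult_diff_rdistrib matrix_vector_mult_add_rdistrib cinner_diff_right
            cinner_add_right mv_scaleM cinner_scale_right)
    qed
    thus ?thesis by simp
  qed
  have saA: "self_adjoint A" unfolding A_def by (rule sa_op_im)
  have saB: "self_adjoint B"
    using sa_op_re[of "F 0"] unfolding B_def self_adjoint_def cadj_def by (simp add: vec_eq_iff)
  have z0: "(0::complex) \<in> ball 0 1" by simp
  have posB: "positive_op B"
    using assms(2) z0 unfolding loewner_le_def B_def F_def by simp
  have posC: "positive_op (mat 1 - B)"
  proof -
    have "positive_op (op_re (F 0) - mat (complex_of_real (Re (zeta 0))))"
      using assms(2) z0 unfolding loewner_le_def F_def by blast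
    moreover have "op_re (F 0) - mat (complex_of_real (Re (zeta 0))) = mat 1 - B"
      unfolding B_def zeta0 by (simp add: mat_def vec_eq_iff)
    ultimately show ?thesis by simp
  qed
  have contrB: "contraction B" by (rule contraction_of_pos[OF posB posC])
  have psi_eq: "\<psi> z = (mat \<i> ** A + mat (zeta z) ** B + mat 1) ** matrix_inv (mat \<i> ** A + mat (zeta z) ** B - mat 1)"
    if z: "z \<in> ball 0 1" for z
    using cayley_inv(1)[OF inv[OF z]] key[OF z] unfolding F_def by simp
  have uniq: "AB = (A, B)" if P: "self_adjoint (fst AB) \<and> positive_op (snd AB) \<and> contraction (snd AB) \<and>
            (\<forall>z\<in>ball 0 1. cayley (\<psi> z) = mat \<i> ** fst AB + mat (zeta z) ** snd AB)" for AB
  proof -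
    have sa1: "self_adjoint (fst AB)" and sa2: "self_adjoint (snd AB)" using P by (auto simp: positive_op_def)
    have "F 0 = mat \<i> ** fst AB + mat (-1) ** snd AB" using P z0 zeta0 unfolding F_def by auto
    hence "A = fst AB" "B = snd AB" unfolding A_def B_def using op_parts_unique[OF sa1 sa2] by simp_all
    thus ?thesis by (simp add: prod_eq_iff)
  qed
  have P: "self_adjoint (fst (A, B)) \<and> positive_op (snd (A, B)) \<and> contraction (snd (A, B)) \<and>
            (\<forall>z\<in>ball 0 1. cayley (\<psi> z) = mat \<i> ** fst (A, B) + mat (zeta z) ** snd (A, B))"
    using saA posB contrB key unfolding F_def by simp
  have ex: "\<exists>!AB. self_adjoint (fst AB) \<and> positive_op (snd AB) \<and> contraction (snd AB) \<and>
            (\<forall>z\<in>ball 0 1. cayley (\<psi> z) = mat \<i> ** fst AB + mat (zeta z) ** snd AB)"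
    by (rule ex1I[where a = "(A, B)"]) (use P uniq in blast)+
  show ?thesis
    unfolding Let_def F_def[symmetric] A_def[symmetric] B_def[symmetric]
    using ex saA posB contrB key psi_eq by (simp add: F_def)
qed

end
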